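(* For finite simple graphs $G$ and $H$ with disjoint vertex sets, $\mathrm{mur}(G)+\mathrm{mur}(H)\le\mathrm{mur}(G\cup H)$.
   Context: For a finite simple undirected graph $G$ on vertices $v_1,\dots,v_n$, let $A_G$ be its $(0,1)$-adjacency matrix, $D_G=\mathrm{diag}(d_1,\dots,d_n)$ with $d_i$ the degree of $v_i$, $I$ the $n\times n$ identity matrix and $J$ the $n\times n$ all-ones matrix. A universal adjacency matrix of $G$ is any matrix $\alpha A_G+\beta I+\gamma J+\delta D_G$ with real scalars $\alpha,\beta,\gamma,\delta$ and $\alpha\neq 0$. The minimum universal rank $\mathrm{mur}(G)$ is the minimum rank over all universal adjacency matrices of $G$. The union $G\cup H$ is the graph with vertex set $V(G)\cup V(H)$ and edge set $E(G)\cup E(H)$. *)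

theory Defs
  imports "Jordan_Normal_Form.DL_Rank"
begin

type_synonym 'a graph = "'a set \<times> ('a \<Rightarrow> 'a \<Rightarrow> bool)"

definition simple_graph :: "'a graph \<Rightarrow> bool" where
  "simple_graph G \<longleftrightarrow> finite (fst G) \<and>
     (\<forall>x y. snd G x y \<longrightarrow> x \<in> fst G \<and> y \<in> fst G \<and> x \<noteq> y \<and> snd G y x)"

definition graph_union :: "'a graph \<Rightarrow> 'a graph \<Rightarrow> 'a graph" where
  "graph_union G H = (fst G \<union> fst H, \<lambda>x y. snd G x y \<or> snd H x y)"

definition degree :: "'a graph \<Rightarrow> 'a \<Rightarrow> nat" where
  "degree G v = card {u \<in> fst G. snd G v u}"

text \<open>The universal adjacency matrix alpha A + beta I + gamma J + delta D as a function on vertices.\<close>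
definition univ_adj :: "'a graph \<Rightarrow> real \<Rightarrow> real \<Rightarrow> real \<Rightarrow> real \<Rightarrow> 'a \<Rightarrow> 'a \<Rightarrow> real" where
  "univ_adj G \<alpha> \<beta> \<gamma> \<delta> u v =
     \<alpha> * (if snd G u v then 1 else 0) + \<beta> * (if u = v then 1 else 0) + \<gamma>
     + \<delta> * (if u = v then real (degree G u) else 0)"

text \<open>A fixed enumeration v_1..v_n of a finite vertex set (the rank does not depend on it).\<close>
definition vertex_enum :: "'a set \<Rightarrow> nat \<Rightarrow> 'a" where
  "vertex_enum V = (SOME f. bij_betw f {..<card V} V)"

definition matrix_of :: "'a set \<Rightarrow> ('a \<Rightarrow> 'a \<Rightarrow> real) \<Rightarrow> real mat" where
  "matrix_of V M = mat (card V) (card V) (\<lambda>(i, j). M (vertex_enum V i) (vertex_enum V j))"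

definition rank_on :: "'a set \<Rightarrow> ('a \<Rightarrow> 'a \<Rightarrow> real) \<Rightarrow> nat" where
  "rank_on V M = vec_space.rank (card V) (matrix_of V M)"

definition mur :: "'a graph \<Rightarrow> nat" where
  "mur G = Min {rank_on (fst G) (univ_adj G \<alpha> \<beta> \<gamma> \<delta>) | \<alpha> \<beta> \<gamma> \<delta>. \<alpha> \<noteq> 0}"

end

theory Submission
  imports Defs "HOL-Library.Function_Algebras"
begin


context vector_space begin

lemma G1: assumes "finite S" "independent C" "C \<subseteq> span S" shows "card C \<le> dim S"
proof -
  obtain B where B: "B \<subseteq> S" "independent B" "S \<subseteq> span B" "card B = dim S"
    by (rule basis_exists)
  have "span S \<subseteq> span B" using B(3) span_mono span_span by blast
  then have "C \<subseteq> span B" using assms(3) by blast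
  moreover have "finite B" using B(1) assms(1) finite_subset by blast
  ultimately show ?thesis using independent_span_bound[of B C] assms(2) B(4) by auto
qed

lemma G2: assumes "finite R" "S \<subseteq> span R" shows "dim S \<le> dim R"
proof -
  obtain B where B: "B \<subseteq> R" "independent B" "R \<subseteq> span B" "card B = dim R"
    by (rule basis_exists)
  have "span R \<subseteq> span B" using B(3) span_mono span_span by blast
  then have "S \<subseteq> span B" using assms(2) by blast
  moreover have "finite B" using B(1) assms(1) finite_subset by blast
  ultimately show ?thesis using dim_le_card[of S B] B(4) by auto
qed

lemma G3: assumes "finite S" "module_hom scale scale f" shows "dim (f ` S) \<le> dim S"
proof -
  obtain B where B: "B \<subseteq> S" "independent B" "S \<subseteq> span B" "card B = dim S"
    by (rule basis_exists)
  have fB: "finite B" using B(1) assms(1) finite_subset by blast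
  have "f ` S \<subseteq> f ` span B" using B(3) by blast
  also have "f ` span B = span (f ` B)" using module_hom.span_image[OF assms(2)] by simp
  finally have "dim (f ` S) \<le> card (f ` B)" using dim_le_card fB by blast
  also have "\<dots> \<le> card B" using card_image_le fB by blast
  finally show ?thesis using B(4) by simp
qed

lemma G5: assumes "w \<in> span S" shows "dim (insert w S) = dim S"
  using span_redundant[OF assms] span_eq_dim by blast

lemma G6: assumes "w \<noteq> 0" shows "dim {w} = 1"
  using dim_eq_card_independent[of "{w}"] assms by simp

lemma G7: assumes "finite R" shows "dim (insert w R) \<le> dim R + 1"
proof -
  obtain B where B: "B \<subseteq> R" "independent B" "R \<subseteq> span B" "card B = dim R"
    by (rule basis_exists)
  have fB: "finite B" using B(1) assms(1) finite_subset by blast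
  have "insert w R \<subseteq> span (insert w B)"
    using B(3) span_mono[of B "insert w B"] span_base[of w "insert w B"] by blast
  then have "dim (insert w R) \<le> card (insert w B)" using dim_le_card fB by blast
  also have "\<dots> \<le> card B + 1" using card_insert_le_m1 fB
    by (simp add: card_insert_if)
  finally show ?thesis using B(4) by simp
qed

lemma G8: assumes "finite Y" "module_hom scale scale f" "inj_on f (span Y)"
  shows "dim Y \<le> dim (f ` Y)"
proof -
  obtain B where B: "B \<subseteq> Y" "independent B" "Y \<subseteq> span B" "card B = dim Y"
    by (rule basis_exists)
  have fB: "finite B" using B(1) assms(1) finite_subset by blast
  have sp: "span B = span Y" using B(1,3) span_mono span_span
    by (metis span_subspace subspace_span subset_antisym)
  have ind: "independent (f ` B)"
    using module_hom.independent_injective_image[OF assms(2) B(2)] assms(3) sp by simp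
  have "inj_on f B" using assms(3) B(1) span_superset
    by (meson inj_on_subset subset_trans)
  then have "card (f ` B) = card B" by (simp add: card_image)
  moreover have "card (f ` B) \<le> dim (f ` Y)"
    using G1[of "f ` Y" "f ` B"] ind B(1) span_superset assms(1) by blast
  ultimately show ?thesis using B(4) by simp
qed

lemma G4: assumes "finite X" "finite Y" "module_hom scale scale f" "\<And>x. x \<in> X \<Longrightarrow> f x = 0"
  shows "dim X + dim (f ` Y) \<le> dim (X \<union> Y)"
proof -
  obtain BX where BX: "BX \<subseteq> X" "independent BX" "X \<subseteq> span BX" "card BX = dim X"
    by (rule basis_exists)
  obtain B' where B': "B' \<subseteq> f ` Y" "independent B'" "f ` Y \<subseteq> span B'" "card B' = dim (f ` Y)"
    by (rule basis_exists)
  obtain B where B: "B \<subseteq> Y" "inj_on f B" "B' = f ` B"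
    using B'(1) subset_image_inj by metis
  have fBX: "finite BX" using BX(1) assms(1) finite_subset by blast
  have fB: "finite B" using B(1) assms(2) finite_subset by blast
  have f0: "f v = 0" if "v \<in> BX" for v using that BX(1) assms(4) by blast
  have disj: "BX \<inter> B = {}"
  proof (rule ccontr)
    assume "BX \<inter> B \<noteq> {}"
    then obtain v where "v \<in> BX" "v \<in> B" by blast
    then have "0 \<in> B'" using f0 B(3) by force
    then show False using B'(2) dependent_zero by blast
  qed
  have ind: "independent (BX \<union> B)"
  proof -
    have "u v = 0" if F: "F \<subseteq> BX \<union> B" "finite F" "(\<Sum>v\<in>F. u v *s v) = 0" "v \<in> F" for F u v
    proof -
      define F1 where "F1 = F \<inter> BX"
      define F2 where "F2 = F \<inter> B"
      have FF: "F = F1 \<union> F2" "F1 \<inter> F2 = {}" using F(1) disj unfolding F1_def F2_def by blast+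
      have fin: "finite F1" "finite F2" using F(2) FF(1) by auto
      have sumsplit: "(\<Sum>v\<in>F. u v *s v) = (\<Sum>v\<in>F1. u v *s v) + (\<Sum>v\<in>F2. u v *s v)"
        using FF fin sum.union_disjoint by metis
      have "f (\<Sum>v\<in>F. u v *s v) = 0" using F(3) module_hom.zero[OF assms(3)] by simp
      then have "(\<Sum>v\<in>F. u v *s f v) = 0"
        using module_hom.sum[OF assms(3), of "\<lambda>v. u v *s v" F] module_hom.scale[OF assms(3)] by simp
      moreover have "(\<Sum>v\<in>F. u v *s f v) = (\<Sum>v\<in>F1. u v *s f v) + (\<Sum>v\<in>F2. u v *s f v)"
        using FF fin sum.union_disjoint by metis
      moreover have "(\<Sum>v\<in>F1. u v *s f v) = 0" using f0 unfolding F1_def by simp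
      ultimately have s2: "(\<Sum>v\<in>F2. u v *s f v) = 0" by simp
      have injF2: "inj_on f F2" using B(2) unfolding F2_def by (meson inj_on_subset Int_lower2)
      define u' where "u' z = u (the_inv_into F2 f z)" for z
      have "(\<Sum>z\<in>f ` F2. u' z *s z) = (\<Sum>v\<in>F2. u' (f v) *s f v)"
        using sum.reindex[OF injF2] by simp
      also have "\<dots> = (\<Sum>v\<in>F2. u v *s f v)"
        unfolding u'_def using the_inv_into_f_f[OF injF2] by simp
      finally have s2': "(\<Sum>z\<in>f ` F2. u' z *s z) = 0" using s2 by simp
      have F2z: "u v = 0" if "v \<in> F2" for v
      proof -
        have "u' (f v) = 0"
          using independentD[OF B'(2), of "f ` F2" u' "f v"] s2' fin(2) that B(3)
          unfolding F2_def by blast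
        then show ?thesis unfolding u'_def using the_inv_into_f_f[OF injF2 that] by simp
      qed
      have "(\<Sum>v\<in>F2. u v *s v) = 0" using F2z by simp
      then have s1: "(\<Sum>v\<in>F1. u v *s v) = 0" using sumsplit F(3) by simp
      have F1z: "u v = 0" if "v \<in> F1" for v
        using independentD[OF BX(2), of F1 u v] s1 fin(1) that unfolding F1_def by blast
      show ?thesis using F(4) FF(1) F1z F2z by blast
    qed
    then show ?thesis using independent_explicit_finite_subsets by blast
  qed
  have "card (BX \<union> B) \<le> dim (X \<union> Y)"
    using G1[of "X \<union> Y" "BX \<union> B"] ind BX(1) B(1) span_superset assms(1,2) by blast
  moreover have "card (BX \<union> B) = card BX + card B" using card_Un_disjoint fBX fB disj by blast
  moreover have "card B = card B'" using B(2,3) card_image by metis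
  ultimately show ?thesis using BX(4) B'(4) by simp
qed

end



definition fscale :: "real \<Rightarrow> ('a \<Rightarrow> real) \<Rightarrow> ('a \<Rightarrow> real)" where
  "fscale c f = (\<lambda>x. c * f x)"

global_interpretation fvs: vector_space fscale
  by unfold_locales (auto simp: fscale_def fun_eq_iff algebra_simps)

lemma fsum_apply: "(sum F A) x = sum (\<lambda>i. F i x) A"
  by (induction A rule: infinite_finite_induct) auto

definition vphi :: "'a set \<Rightarrow> real vec \<Rightarrow> 'a \<Rightarrow> real" where
 "vphi V x = (\<lambda>w. if w \<in> V then x $ (inv_into {..<card V} (vertex_enum V) w) else 0)"



lemma enum_bij: assumes "finite V" shows "bij_betw (vertex_enum V) {..<card V} V"
proof -
  obtain h where h: "bij_betw h {0..<card V} V" using ex_bij_betw_nat_finite[OF assms] by blast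
  have "bij_betw h {..<card V} V" using h by (simp add: atLeast0LessThan)
  then show ?thesis unfolding vertex_enum_def by (rule someI[of "\<lambda>f. bij_betw f {..<card V} V" h])
qed

lemma enum_inv: assumes "finite V" "i < card V" shows "inv_into {..<card V} (vertex_enum V) (vertex_enum V i) = i"
  using enum_bij[OF assms(1)] assms(2) by (simp add: bij_betw_def inv_into_f_f)

lemma enum_in: assumes "finite V" "i < card V" shows "vertex_enum V i \<in> V"
  using enum_bij[OF assms(1)] assms(2) by (auto simp: bij_betw_def)

lemma vphi_inj: assumes "finite V" "x \<in> carrier_vec (card V)" "y \<in> carrier_vec (card V)" "vphi V x = vphi V y"
  shows "x = y"
proof (rule eq_vecI)
  show "dim_vec x = dim_vec y" using assms by simp
  fix i assume "i < dim_vec y"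
  then have i: "i < card V" using assms by simp
  have "vphi V x (vertex_enum V i) = vphi V y (vertex_enum V i)" using assms(4) by simp
  then show "x $ i = y $ i" unfolding vphi_def using enum_inv[OF assms(1) i] enum_in[OF assms(1) i] by simp
qed

lemma vphi_lincomb:
  fixes a :: "real vec \<Rightarrow> real"
  assumes "finite V" "A \<subseteq> carrier_vec (card V)"
  shows "vphi V (module.lincomb (module_vec TYPE(real) (card V)) a A) = (\<Sum>v\<in>A. fscale (a v) (vphi V v))"
proof -
  interpret vec_space "TYPE(real)" "card V" .
  show ?thesis
  proof (rule ext)
    fix w
    show "vphi V (lincomb a A) w = (\<Sum>v\<in>A. fscale (a v) (vphi V v)) w"
    proof (cases "w \<in> V")
      case True
      define i where "i = inv_into {..<card V} (vertex_enum V) w"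
      have i: "i < card V"
        using enum_bij[OF assms(1)] True unfolding i_def by (metis bij_betw_def inv_into_into lessThan_iff)
      have "vphi V (lincomb a A) w = lincomb a A $ i" unfolding vphi_def i_def using True by simp
      also have "\<dots> = (\<Sum>v\<in>A. a v * v $ i)" by (rule lincomb_index[OF i assms(2)])
      also have "\<dots> = (\<Sum>v\<in>A. fscale (a v) (vphi V v)) w"
        unfolding fsum_apply fscale_def vphi_def i_def using True by simp
      finally show ?thesis .
    next
      case False
      then show ?thesis unfolding vphi_def fsum_apply fscale_def by simp
    qed
  qed
qed


lemma vphi_zero: assumes "finite V" shows "vphi V (0\<^sub>v (card V)) = 0"
proof (rule ext)
  fix w
  show "vphi V (0\<^sub>v (card V)) w = 0 w"
  proof (cases "w \<in> V")
    case True
    have "w \<in> vertex_enum V ` {..<card V}" using enum_bij[OF assms] True by (simp add: bij_betw_def)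
    then have "inv_into {..<card V} (vertex_enum V) w \<in> {..<card V}" by (rule inv_into_into)
    then show ?thesis unfolding vphi_def using True by simp
  qed (simp add: vphi_def)
qed

lemma vphi_dep:
  assumes "finite V" "T \<subseteq> carrier_vec (card V)"
  shows "module.lin_dep class_ring (module_vec TYPE(real) (card V)) T \<longleftrightarrow> fvs.dependent (vphi V ` T)"
proof -
  interpret vec_space "TYPE(real)" "card V" .
  have injT: "inj_on (vphi V) T" using vphi_inj[OF assms(1)] assms(2) by (meson inj_onI subsetD)
  show ?thesis
  proof
    assume "lin_dep T"
    then obtain A a v where A: "finite A" "A \<subseteq> T" "lincomb a A = 0\<^sub>v (card V)" "v \<in> A" "a v \<noteq> 0"
      unfolding lin_dep_def by auto
    have AC: "A \<subseteq> carrier_vec (card V)" using A(2) assms(2) by blast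
    have injA: "inj_on (vphi V) A" using injT A(2) inj_on_subset by blast
    have s0: "(\<Sum>x\<in>A. fscale (a x) (vphi V x)) = 0"
      using vphi_lincomb[OF assms(1) AC, of a] A(3) vphi_zero[OF assms(1)] by simp
    define u where "u z = a (the_inv_into A (vphi V) z)" for z
    have "(\<Sum>z\<in>vphi V ` A. fscale (u z) z) = (\<Sum>x\<in>A. fscale (u (vphi V x)) (vphi V x))"
      using sum.reindex[OF injA] by simp
    also have "\<dots> = (\<Sum>x\<in>A. fscale (a x) (vphi V x))"
      unfolding u_def using the_inv_into_f_f[OF injA] by simp
    finally have s1: "(\<Sum>z\<in>vphi V ` A. fscale (u z) z) = 0" using s0 by simp
    have "u (vphi V v) \<noteq> 0" unfolding u_def using the_inv_into_f_f[OF injA A(4)] A(5) by simp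
    then show "fvs.dependent (vphi V ` T)" unfolding fvs.dependent_explicit
      using s1 A(1,2,4) by blast
  next
    assume "fvs.dependent (vphi V ` T)"
    then obtain t u where t: "finite t" "t \<subseteq> vphi V ` T" "(\<Sum>z\<in>t. fscale (u z) z) = 0" "\<exists>z\<in>t. u z \<noteq> 0"
      unfolding fvs.dependent_explicit by blast
    obtain B where B: "B \<subseteq> T" "inj_on (vphi V) B" "t = vphi V ` B"
      using t(2) subset_image_inj by metis
    have fB: "finite B" using t(1) B(2,3) finite_image_iff by blast
    have BC: "B \<subseteq> carrier_vec (card V)" using B(1) assms(2) by blast
    define a where "a x = u (vphi V x)" for x
    have "vphi V (lincomb a B) = (\<Sum>x\<in>B. fscale (u (vphi V x)) (vphi V x))"
      using vphi_lincomb[OF assms(1) BC, of a] unfolding a_def by simp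
    also have "\<dots> = (\<Sum>z\<in>t. fscale (u z) z)" unfolding B(3) using sum.reindex[OF B(2), of "\<lambda>z. fscale (u z) z"] by simp
    also have "\<dots> = vphi V (0\<^sub>v (card V))" using t(3) vphi_zero[OF assms(1)] by simp
    finally have "lincomb a B = 0\<^sub>v (card V)"
      using vphi_inj[OF assms(1)] lincomb_closed[OF BC] by (meson zero_carrier_vec)
    moreover obtain z where "z \<in> t" "u z \<noteq> 0" using t(4) by blast
    then obtain v where "v \<in> B" "a v \<noteq> 0" using B(3) unfolding a_def by blast
    ultimately show "lin_dep T" unfolding lin_dep_def using fB B(1) by blast
  qed
qed


definition colf :: "'a set \<Rightarrow> ('a \<Rightarrow> 'a \<Rightarrow> real) \<Rightarrow> 'a \<Rightarrow> 'a \<Rightarrow> real" where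
  "colf V M v = (\<lambda>w. if w \<in> V then M w v else 0)"

lemma vphi_col:
  assumes "finite V" "j < card V"
  shows "vphi V (col (matrix_of V M) j) = colf V M (vertex_enum V j)"
proof (rule ext)
  fix w
  show "vphi V (col (matrix_of V M) j) w = colf V M (vertex_enum V j) w"
  proof (cases "w \<in> V")
    case True
    have "w \<in> vertex_enum V ` {..<card V}" using enum_bij[OF assms(1)] True by (simp add: bij_betw_def)
    then have i: "inv_into {..<card V} (vertex_enum V) w \<in> {..<card V}" by (rule inv_into_into)
    have e: "vertex_enum V (inv_into {..<card V} (vertex_enum V) w) = w"
      using \<open>w \<in> vertex_enum V ` {..<card V}\<close> by (rule f_inv_into_f)
    show ?thesis unfolding vphi_def colf_def matrix_of_def using True i e assms(2) by simp
  qed (simp add: vphi_def colf_def)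
qed

lemma vphi_cols:
  assumes "finite V"
  shows "vphi V ` set (cols (matrix_of V M)) = colf V M ` V"
proof -
  have "set (cols (matrix_of V M)) = col (matrix_of V M) ` {..<card V}"
    unfolding cols_def matrix_of_def by auto
  then have "vphi V ` set (cols (matrix_of V M)) = (\<lambda>j. colf V M (vertex_enum V j)) ` {..<card V}"
    using vphi_col[OF assms] by (auto simp: image_iff)
  also have "\<dots> = colf V M ` (vertex_enum V ` {..<card V})" by (simp add: image_image)
  also have "vertex_enum V ` {..<card V} = V" using enum_bij[OF assms] by (simp add: bij_betw_def)
  finally show ?thesis .
qed

lemma rank_on_dim:
  assumes "finite V"
  shows "rank_on V M = fvs.dim (colf V M ` V)"
proof -
  interpret vec_space "TYPE(real)" "card V" .
  define Mx where "Mx = matrix_of V M"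
  have Mc: "Mx \<in> carrier_mat (card V) (card V)" unfolding Mx_def matrix_of_def by simp
  have cC: "set (cols Mx) \<subseteq> carrier_vec (card V)" using cols_dim[of Mx] Mc by simp
  define P where "P T = (T \<subseteq> set (cols Mx) \<and> lin_indpt T)" for T
  have "P {}" unfolding P_def lin_dep_def by simp
  then obtain S where S: "finite S" "maximal S P"
    using maximal_exists_superset[of "set (cols Mx)" P "{}"] unfolding P_def by blast
  have r: "rank Mx = card S" using rank_card_indpt[OF Mc] S(2) unfolding P_def by blast
  have SP: "S \<subseteq> set (cols Mx)" "lin_indpt S" using S(2) unfolding maximal_def P_def by auto
  have SC: "S \<subseteq> carrier_vec (card V)" using SP(1) cC by blast
  have injC: "inj_on (vphi V) (carrier_vec (card V))" using vphi_inj[OF assms] by (meson inj_onI)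
  have ind: "fvs.independent (vphi V ` S)" using vphi_dep[OF assms SC] SP(2) by simp
  have sp: "vphi V ` set (cols Mx) \<subseteq> fvs.span (vphi V ` S)"
  proof
    fix z assume "z \<in> vphi V ` set (cols Mx)"
    then obtain c where c: "c \<in> set (cols Mx)" "z = vphi V c" by blast
    show "z \<in> fvs.span (vphi V ` S)"
    proof (cases "c \<in> S")
      case True
      then show ?thesis using c(2) fvs.span_base by blast
    next
      case False
      have "\<not> P (insert c S)" using S(2) False unfolding maximal_def by blast
      then have "lin_dep (insert c S)" unfolding P_def using SP(1) c(1) by blast
      moreover have "insert c S \<subseteq> carrier_vec (card V)" using SC c(1) cC by blast
      ultimately have "fvs.dependent (insert (vphi V c) (vphi V ` S))"
        using vphi_dep[OF assms, of "insert c S"] by simp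
      moreover have "vphi V c \<notin> vphi V ` S"
        using False injC SC c(1) cC by (metis in_mono inj_on_image_mem_iff)
      ultimately show ?thesis using fvs.independent_insert ind c(2) by metis
    qed
  qed
  have "card (vphi V ` S) = fvs.dim (vphi V ` set (cols Mx))"
    using fvs.basis_card_eq_dim[OF _ sp ind] SP(1) by blast
  moreover have "card (vphi V ` S) = card S" using inj_on_subset[OF injC SC] card_image by blast
  ultimately show ?thesis unfolding rank_on_def using r vphi_cols[OF assms, of M] Mx_def by simp
qed



lemma fhomI:
  fixes f :: "('a \<Rightarrow> real) \<Rightarrow> ('a \<Rightarrow> real)"
  assumes "\<And>x y. f (x + y) = f x + f y" "\<And>c x. f (fscale c x) = fscale c (f x)"
  shows "module_hom fscale fscale f"
proof -
  have m: "Modules.module (fscale :: real \<Rightarrow> ('a \<Rightarrow> real) \<Rightarrow> _)" using Vector_Spaces.module_iff_vector_space fvs.vector_space_axioms by blast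
  show ?thesis unfolding module_hom_iff using m assms by auto
qed

lemma img2: "(\<And>v. v \<in> A \<Longrightarrow> F (g v) = h v) \<Longrightarrow> F ` (g ` A) = h ` A"
  by (auto simp: image_image intro!: image_cong)

lemma core:
  fixes VG VH :: "'a set" and a b :: "'a \<Rightarrow> 'a \<Rightarrow> real" and \<gamma> :: real and mG mH :: nat
  assumes fin: "finite VG" "finite VH" and disj: "VG \<inter> VH = {}"
  and hG: "\<And>c. mG \<le> fvs.dim ((\<lambda>v w. if w \<in> VG then a w v + c else 0) ` VG)"
  and hH: "\<And>d. mH \<le> fvs.dim ((\<lambda>v w. if w \<in> VH then b w v + d else 0) ` VH)"
  shows "mG + mH \<le> fvs.dim ((\<lambda>v w. if w \<in> VG then a w v else if w \<in> VH then \<gamma> else 0) ` VG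
           \<union> (\<lambda>v w. if w \<in> VH then b w v else if w \<in> VG then \<gamma> else 0) ` VH)"
proof -
  define SG where "SG = (\<lambda>v w. if w \<in> VG then a w v else if w \<in> VH then \<gamma> else 0) ` VG"
  define SH where "SH = (\<lambda>v w. if w \<in> VH then b w v else if w \<in> VG then \<gamma> else 0) ` VH"
  define A0 where "A0 = (\<lambda>v w. if w \<in> VG then a w v else 0) ` VG"
  define B0 where "B0 = (\<lambda>v w. if w \<in> VH then b w v else 0) ` VH"
  define PG where "PG x = (\<lambda>w. if w \<in> VG then x w else (0::real))" for x :: "'a \<Rightarrow> real"
  define PH where "PH x = (\<lambda>w. if w \<in> VH then x w else (0::real))" for x :: "'a \<Rightarrow> real"
  have finS: "finite SG" "finite SH" "finite A0" "finite B0"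
    unfolding SG_def SH_def A0_def B0_def using fin by auto
  have mGA: "mG \<le> fvs.dim A0" using hG[of 0, unfolded add_0_right] unfolding A0_def .
  have mHB: "mH \<le> fvs.dim B0" using hH[of 0, unfolded add_0_right] unfolding B0_def .
  have homPG: "module_hom fscale fscale PG"
    by (rule fhomI) (auto simp: PG_def fscale_def fun_eq_iff)
  have homPH: "module_hom fscale fscale PH"
    by (rule fhomI) (auto simp: PH_def fscale_def fun_eq_iff)
  have PGSG: "PG ` SG = A0" unfolding SG_def A0_def by (rule img2) (auto simp: PG_def fun_eq_iff)
  have PHSH: "PH ` SH = B0" unfolding SH_def B0_def by (rule img2) (auto simp: PH_def fun_eq_iff)
  have mGS: "mG \<le> fvs.dim SG" using mGA fvs.G3[OF finS(1) homPG] PGSG by simp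
  have mHS: "mH \<le> fvs.dim SH" using mHB fvs.G3[OF finS(2) homPH] PHSH by simp
  show ?thesis
  proof (cases "VH = {} \<or> VG = {} \<or> \<gamma> = 0")
    case True
    have "fvs.dim SH + fvs.dim (PG ` SG) \<le> fvs.dim (SH \<union> SG)"
    proof (rule fvs.G4[OF finS(2) finS(1) homPG])
      fix x assume "x \<in> SH"
      then show "PG x = 0" unfolding SH_def PG_def using True disj by (auto simp: fun_eq_iff)
    qed
    then show ?thesis using mHS mGA PGSG unfolding SG_def[symmetric] SH_def[symmetric]
      by (simp add: Un_commute)
  next
    case False
    then obtain g0 h0 where g0: "g0 \<in> VG" and h0: "h0 \<in> VH" and \<gamma>0: "\<gamma> \<noteq> 0" by blast
    define e where "e = (\<lambda>w. if w \<in> VG then 1 else (0::real))"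
    define f where "f = (\<lambda>w. if w \<in> VH then 1 else (0::real))"
    define piH where "piH x = (\<lambda>w. if w \<in> VH then x w - x h0 else (0::real))" for x :: "'a \<Rightarrow> real"
    define piG where "piG x = (\<lambda>w. if w \<in> VG then x w - x g0 else (0::real))" for x :: "'a \<Rightarrow> real"
    define L where "L c x = (\<lambda>w. if w \<in> VG then x w + c / \<gamma> * x h0 else (0::real))" for c and x :: "'a \<Rightarrow> real"
    define M where "M d x = (\<lambda>w. if w \<in> VH then x w + d / \<gamma> * x g0 else (0::real))" for d and x :: "'a \<Rightarrow> real"
    have g0h: "g0 \<notin> VH" "h0 \<notin> VG" using g0 h0 disj by auto
    have homPiH: "module_hom fscale fscale piH"
      by (rule fhomI) (auto simp: piH_def fscale_def fun_eq_iff algebra_simps)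
    have homPiG: "module_hom fscale fscale piG"
      by (rule fhomI) (auto simp: piG_def fscale_def fun_eq_iff algebra_simps)
    have homL: "module_hom fscale fscale (L c)" for c
      by (rule fhomI) (auto simp: L_def fscale_def fun_eq_iff algebra_simps)
    have homM: "module_hom fscale fscale (M d)" for d
      by (rule fhomI) (auto simp: M_def fscale_def fun_eq_iff algebra_simps)
    define T where "T = SG \<union> SH"
    have finT: "finite T" unfolding T_def using finS by simp
    have LSG: "L c ` SG = (\<lambda>v w. if w \<in> VG then a w v + c else 0) ` VG" for c
      unfolding SG_def by (rule img2) (use h0 g0h \<gamma>0 in \<open>auto simp: L_def fun_eq_iff\<close>)
    have MSH: "M d ` SH = (\<lambda>v w. if w \<in> VH then b w v + d else 0) ` VH" for d
      unfolding SH_def by (rule img2) (use g0 g0h \<gamma>0 in \<open>auto simp: M_def fun_eq_iff\<close>)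
    have B1: "fvs.dim SG + fvs.dim (piH ` SH) \<le> fvs.dim T"
      unfolding T_def
    proof (rule fvs.G4[OF finS(1) finS(2) homPiH])
      fix x assume "x \<in> SG"
      then show "piH x = 0" unfolding SG_def piH_def using h0 g0h disj by (auto simp: fun_eq_iff)
    qed
    have B2: "fvs.dim SH + fvs.dim (piG ` SG) \<le> fvs.dim T"
      unfolding T_def Un_commute[of SG]
    proof (rule fvs.G4[OF finS(2) finS(1) homPiG])
      fix x assume "x \<in> SH"
      then show "piG x = 0" unfolding SH_def piG_def using g0 g0h disj by (auto simp: fun_eq_iff)
    qed
    have qH: "mH \<le> fvs.dim (piH ` SH) + 1"
    proof -
      have "B0 \<subseteq> fvs.span (insert f (piH ` SH))"
      proof
        fix z assume "z \<in> B0"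
        then obtain v where v: "v \<in> VH" "z = (\<lambda>w. if w \<in> VH then b w v else 0)" unfolding B0_def by blast
        define hv where "hv = (\<lambda>w. if w \<in> VH then b w v else if w \<in> VG then \<gamma> else 0)"
        have "hv \<in> SH" unfolding SH_def hv_def using v(1) by blast
        then have "piH hv \<in> fvs.span (insert f (piH ` SH))" by (intro fvs.span_base) blast
        moreover have "fscale (b h0 v) f \<in> fvs.span (insert f (piH ` SH))"
          by (intro fvs.span_scale fvs.span_base) blast
        ultimately have "piH hv + fscale (b h0 v) f \<in> fvs.span (insert f (piH ` SH))"
          by (rule fvs.span_add)
        moreover have "piH hv + fscale (b h0 v) f = z"
          using v h0 g0h unfolding piH_def hv_def fscale_def f_def by (auto simp: fun_eq_iff)
        ultimately show "z \<in> fvs.span (insert f (piH ` SH))" by simp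
      qed
      moreover have "finite (insert f (piH ` SH))" "finite (piH ` SH)" using finS by auto
      ultimately have "fvs.dim B0 \<le> fvs.dim (insert f (piH ` SH))" using fvs.G2 by blast
      also have "\<dots> \<le> fvs.dim (piH ` SH) + 1" using fvs.G7 \<open>finite (piH ` SH)\<close> by blast
      finally show ?thesis using mHB by simp
    qed
    have qG: "mG \<le> fvs.dim (piG ` SG) + 1"
    proof -
      have "A0 \<subseteq> fvs.span (insert e (piG ` SG))"
      proof
        fix z assume "z \<in> A0"
        then obtain v where v: "v \<in> VG" "z = (\<lambda>w. if w \<in> VG then a w v else 0)" unfolding A0_def by blast
        define gv where "gv = (\<lambda>w. if w \<in> VG then a w v else if w \<in> VH then \<gamma> else 0)"
        have "gv \<in> SG" unfolding SG_def gv_def using v(1) by blast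
        then have "piG gv \<in> fvs.span (insert e (piG ` SG))" by (intro fvs.span_base) blast
        moreover have "fscale (a g0 v) e \<in> fvs.span (insert e (piG ` SG))"
          by (intro fvs.span_scale fvs.span_base) blast
        ultimately have "piG gv + fscale (a g0 v) e \<in> fvs.span (insert e (piG ` SG))"
          by (rule fvs.span_add)
        moreover have "piG gv + fscale (a g0 v) e = z"
          using v g0 g0h unfolding piG_def gv_def fscale_def e_def by (auto simp: fun_eq_iff)
        ultimately show "z \<in> fvs.span (insert e (piG ` SG))" by simp
      qed
      moreover have "finite (insert e (piG ` SG))" "finite (piG ` SG)" using finS by auto
      ultimately have "fvs.dim A0 \<le> fvs.dim (insert e (piG ` SG))" using fvs.G2 by blast
      also have "\<dots> \<le> fvs.dim (piG ` SG) + 1" using fvs.G7 \<open>finite (piG ` SG)\<close> by blast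
      finally show ?thesis using mGA by simp
    qed
    have propG: "\<forall>w. w \<notin> VG \<longrightarrow> x w = x h0 * f w" if "x \<in> fvs.span SG" for x
    proof -
      have sub: "fvs.subspace {x. \<forall>w. w \<notin> VG \<longrightarrow> x w = x h0 * f w}"
        unfolding fvs.subspace_def by (auto simp: fscale_def algebra_simps)
      have "SG \<subseteq> {x. \<forall>w. w \<notin> VG \<longrightarrow> x w = x h0 * f w}"
        unfolding SG_def f_def using h0 g0h by auto
      then have "fvs.span SG \<subseteq> {x. \<forall>w. w \<notin> VG \<longrightarrow> x w = x h0 * f w}"
        using fvs.span_minimal sub by blast
      then show ?thesis using that by blast
    qed
    have propH: "\<forall>w. w \<notin> VH \<longrightarrow> x w = x g0 * e w" if "x \<in> fvs.span SH" for x
    proof -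
      have sub: "fvs.subspace {x. \<forall>w. w \<notin> VH \<longrightarrow> x w = x g0 * e w}"
        unfolding fvs.subspace_def by (auto simp: fscale_def algebra_simps)
      have "SH \<subseteq> {x. \<forall>w. w \<notin> VH \<longrightarrow> x w = x g0 * e w}"
        unfolding SH_def e_def using g0 g0h by auto
      then have "fvs.span SH \<subseteq> {x. \<forall>w. w \<notin> VH \<longrightarrow> x w = x g0 * e w}"
        using fvs.span_minimal sub by blast
      then show ?thesis using that by blast
    qed
    have injlem: "inj_on p (fvs.span S)"
      if hp: "module_hom fscale fscale p" and k: "\<forall>x\<in>fvs.span S. p x = 0 \<longrightarrow> x = 0" for p S
    proof (rule inj_onI)
      fix x y assume xy: "x \<in> fvs.span S" "y \<in> fvs.span S" "p x = p y"
      have "p (x - y) = 0" using module_hom.diff[OF hp] xy(3) by simp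
      moreover have "x - y \<in> fvs.span S" using fvs.span_diff xy(1,2) by blast
      ultimately have "x - y = 0" using k by blast
      then show "x = y" by simp
    qed
    show ?thesis
    proof (cases "\<forall>x\<in>fvs.span SH. piH x = 0 \<longrightarrow> x = 0")
      case True
      have "fvs.dim SH \<le> fvs.dim (piH ` SH)" using fvs.G8[OF finS(2) homPiH injlem[OF homPiH True]] .
      then show ?thesis using B1 mGS mHS unfolding T_def SG_def[symmetric] SH_def[symmetric] by linarith
    next
      case KH: False
      show ?thesis
      proof (cases "\<forall>x\<in>fvs.span SG. piG x = 0 \<longrightarrow> x = 0")
        case True
        have "fvs.dim SG \<le> fvs.dim (piG ` SG)" using fvs.G8[OF finS(1) homPiG injlem[OF homPiG True]] .
        then show ?thesis using B2 mGS mHS unfolding T_def SG_def[symmetric] SH_def[symmetric] by linarith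
      next
        case KG: False
        obtain w1 where w1: "w1 \<in> fvs.span SH" "piH w1 = 0" "w1 \<noteq> 0" using KH by blast
        obtain w2 where w2: "w2 \<in> fvs.span SG" "piG w2 = 0" "w2 \<noteq> 0" using KG by blast
        have w2s: "w2 = (\<lambda>w. w2 g0 * e w + w2 h0 * f w)"
        proof (rule ext)
          fix w show "w2 w = w2 g0 * e w + w2 h0 * f w"
          proof (cases "w \<in> VG")
            case True
            have "piG w2 w = 0" using w2(2) by simp
            then show ?thesis using True disj unfolding piG_def e_def f_def by auto
          next
            case False
            then show ?thesis using propG[OF w2(1)] unfolding e_def by simp
          qed
        qed
        have w1s: "w1 = (\<lambda>w. w1 g0 * e w + w1 h0 * f w)"
        proof (rule ext)
          fix w show "w1 w = w1 g0 * e w + w1 h0 * f w"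
          proof (cases "w \<in> VH")
            case True
            have "piH w1 w = 0" using w1(2) by simp
            then show ?thesis using True disj unfolding piH_def e_def f_def by auto
          next
            case False
            then show ?thesis using propH[OF w1(1)] unfolding f_def by simp
          qed
        qed
        show ?thesis
        proof (cases "w2 h0 = 0")
          case False
          define c where "c = - w2 g0 * \<gamma> / w2 h0"
          have "L c w2 = 0"
          proof (rule ext)
            fix w
            have "w2 g0 + c / \<gamma> * w2 h0 = 0" unfolding c_def using False \<gamma>0 by (simp add: field_simps)
            moreover have "w \<in> VG \<Longrightarrow> w2 w = w2 g0"
              using fun_cong[OF w2s, of w] disj unfolding e_def f_def by auto
            ultimately show "L c w2 w = 0 w" unfolding L_def by simp
          qed
          then have "fvs.dim {w2} + fvs.dim (L c ` SG) \<le> fvs.dim ({w2} \<union> SG)"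
            using fvs.G4[OF _ finS(1) homL, of "{w2}" c] by simp
          moreover have "fvs.dim ({w2} \<union> SG) = fvs.dim SG" using fvs.G5[OF w2(1)] by simp
          moreover have "fvs.dim {w2} = 1" using fvs.G6[OF w2(3)] .
          moreover have "mG \<le> fvs.dim (L c ` SG)" using hG[of c] LSG[of c] by simp
          ultimately show ?thesis using B1 qH unfolding T_def SG_def[symmetric] SH_def[symmetric] by linarith
        next
          case t2: True
          show ?thesis
          proof (cases "w1 g0 = 0")
            case False
            define d where "d = - w1 h0 * \<gamma> / w1 g0"
            have "M d w1 = 0"
            proof (rule ext)
              fix w
              have "w1 h0 + d / \<gamma> * w1 g0 = 0" unfolding d_def using False \<gamma>0 by (simp add: field_simps)
              moreover have "w \<in> VH \<Longrightarrow> w1 w = w1 h0"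
                using fun_cong[OF w1s, of w] disj unfolding e_def f_def by auto
              ultimately show "M d w1 w = 0 w" unfolding M_def by simp
            qed
            then have "fvs.dim {w1} + fvs.dim (M d ` SH) \<le> fvs.dim ({w1} \<union> SH)"
              using fvs.G4[OF _ finS(2) homM, of "{w1}" d] by simp
            moreover have "fvs.dim ({w1} \<union> SH) = fvs.dim SH" using fvs.G5[OF w1(1)] by simp
            moreover have "fvs.dim {w1} = 1" using fvs.G6[OF w1(3)] .
            moreover have "mH \<le> fvs.dim (M d ` SH)" using hH[of d] MSH[of d] by simp
            ultimately show ?thesis using B2 qG unfolding T_def SG_def[symmetric] SH_def[symmetric] by linarith
          next
            case s1: True
            have s2: "w2 g0 \<noteq> 0" using w2s t2 w2(3) by auto
            have t1: "w1 h0 \<noteq> 0" using w1s s1 w1(3) by auto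
            have "e = fscale (1 / w2 g0) w2" using s2 t2 by (subst w2s) (auto simp: fscale_def fun_eq_iff)
            then have eS: "e \<in> fvs.span SG" using fvs.span_scale[OF w2(1)] by simp
            have "f = fscale (1 / w1 h0) w1" using t1 s1 by (subst w1s) (auto simp: fscale_def fun_eq_iff)
            then have fS: "f \<in> fvs.span SH" using fvs.span_scale[OF w1(1)] by simp
            define R1 where "R1 = insert f B0"
            define R2 where "R2 = insert e A0"
            have finR: "finite R1" "finite R2" unfolding R1_def R2_def using finS by auto
            have G4R: "fvs.dim R1 + fvs.dim (PG ` R2) \<le> fvs.dim (R1 \<union> R2)"
            proof (rule fvs.G4[OF finR homPG])
              fix x assume "x \<in> R1"
              then show "PG x = 0" unfolding R1_def B0_def PG_def f_def using disj by (auto simp: fun_eq_iff)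
            qed
            have PGR2: "PG ` R2 = R2"
            proof -
              have "PG e = e" by (auto simp: PG_def e_def fun_eq_iff)
              moreover have "PG ` A0 = A0" unfolding A0_def by (rule img2) (auto simp: PG_def fun_eq_iff)
              ultimately show ?thesis unfolding R2_def by simp
            qed
            have G4R': "fvs.dim R1 + fvs.dim R2 \<le> fvs.dim (R1 \<union> R2)" using G4R PGR2 by simp
            have "R1 \<union> R2 \<subseteq> fvs.span T"
            proof -
              have spT: "fvs.span SG \<subseteq> fvs.span T" "fvs.span SH \<subseteq> fvs.span T"
                unfolding T_def by (auto intro: fvs.span_mono[THEN subsetD])
              have "z \<in> fvs.span T" if "z \<in> B0" for z
              proof -
                obtain v where v: "v \<in> VH" "z = (\<lambda>w. if w \<in> VH then b w v else 0)" using \<open>z \<in> B0\<close> unfolding B0_def by blast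
                define hv where "hv = (\<lambda>w. if w \<in> VH then b w v else if w \<in> VG then \<gamma> else 0)"
                have "hv \<in> T" unfolding T_def SH_def hv_def using v(1) by blast
                then have "hv - fscale \<gamma> e \<in> fvs.span T"
                  using fvs.span_diff[OF fvs.span_base fvs.span_scale[OF subsetD[OF spT(1) eS]]] by blast
                moreover have "hv - fscale \<gamma> e = z" using v disj unfolding hv_def e_def fscale_def by (auto simp: fun_eq_iff)
                ultimately show ?thesis by simp
              qed
              moreover have "z \<in> fvs.span T" if "z \<in> A0" for z
              proof -
                obtain v where v: "v \<in> VG" "z = (\<lambda>w. if w \<in> VG then a w v else 0)" using \<open>z \<in> A0\<close> unfolding A0_def by blast
                define gv where "gv = (\<lambda>w. if w \<in> VG then a w v else if w \<in> VH then \<gamma> else 0)"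
                have "gv \<in> T" unfolding T_def SG_def gv_def using v(1) by blast
                then have "gv - fscale \<gamma> f \<in> fvs.span T"
                  using fvs.span_diff[OF fvs.span_base fvs.span_scale[OF subsetD[OF spT(2) fS]]] by blast
                moreover have "gv - fscale \<gamma> f = z" using v disj unfolding gv_def f_def fscale_def by (auto simp: fun_eq_iff)
                ultimately show ?thesis by simp
              qed
              ultimately show ?thesis unfolding R1_def R2_def using spT eS fS by blast
            qed
            then have "fvs.dim (R1 \<union> R2) \<le> fvs.dim T" using fvs.G2[OF finT] by blast
            moreover have "fvs.dim B0 \<le> fvs.dim R1"
              using fvs.G2[OF finR(1), of B0] fvs.span_superset unfolding R1_def by blast
            moreover have "fvs.dim A0 \<le> fvs.dim R2"
              using fvs.G2[OF finR(2), of A0] fvs.span_superset unfolding R2_def by blast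
            ultimately show ?thesis using mGA mHB unfolding T_def SG_def[symmetric] SH_def[symmetric]
              using G4R' by linarith
          qed
        qed
      qed
    qed
  qed
qed



lemma rank_on_le: assumes "finite V" shows "rank_on V M \<le> card V"
proof -
  have "rank_on V M = fvs.dim (colf V M ` V)" by (rule rank_on_dim[OF assms])
  also have "\<dots> \<le> card (colf V M ` V)" using fvs.dim_le_card' assms by blast
  also have "\<dots> \<le> card V" using card_image_le assms by blast
  finally show ?thesis .
qed

lemma mur_fin:
  assumes "simple_graph G"
  shows "finite {rank_on (fst G) (univ_adj G \<alpha> \<beta> \<gamma> \<delta>) | \<alpha> \<beta> \<gamma> \<delta>. \<alpha> \<noteq> 0}"
proof -
  have fin: "finite (fst G)" using assms unfolding simple_graph_def by blast
  have "{rank_on (fst G) (univ_adj G \<alpha> \<beta> \<gamma> \<delta>) | \<alpha> \<beta> \<gamma> \<delta>. \<alpha> \<noteq> 0} \<subseteq> {..card (fst G)}"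
    using rank_on_le[OF fin] by auto
  then show ?thesis using finite_subset by blast
qed

lemma mur_le:
  assumes "simple_graph G" "\<alpha> \<noteq> 0"
  shows "mur G \<le> rank_on (fst G) (univ_adj G \<alpha> \<beta> \<gamma> \<delta>)"
  unfolding mur_def by (rule Min_le[OF mur_fin[OF assms(1)]]) (use assms(2) in blast)

lemma mur_attained:
  assumes "simple_graph G"
  obtains \<alpha> \<beta> \<gamma> \<delta> where "\<alpha> \<noteq> 0" "mur G = rank_on (fst G) (univ_adj G \<alpha> \<beta> \<gamma> \<delta>)"
proof -
  have "rank_on (fst G) (univ_adj G 1 0 0 0) \<in> {rank_on (fst G) (univ_adj G \<alpha> \<beta> \<gamma> \<delta>) | \<alpha> \<beta> \<gamma> \<delta>. \<alpha> \<noteq> 0}"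
    by force
  then have ne: "{rank_on (fst G) (univ_adj G \<alpha> \<beta> \<gamma> \<delta>) | \<alpha> \<beta> \<gamma> \<delta>. \<alpha> \<noteq> 0} \<noteq> {}" by blast
  have "mur G \<in> {rank_on (fst G) (univ_adj G \<alpha> \<beta> \<gamma> \<delta>) | \<alpha> \<beta> \<gamma> \<delta>. \<alpha> \<noteq> 0}"
    unfolding mur_def by (rule Min_in[OF mur_fin[OF assms] ne])
  then show ?thesis using that by blast
qed

lemma shift_bound:
  assumes "simple_graph G" "\<alpha> \<noteq> 0"
  shows "mur G \<le> fvs.dim ((\<lambda>v w. if w \<in> fst G then univ_adj G \<alpha> \<beta> \<gamma> \<delta> w v + c else 0) ` fst G)"
proof -
  have fin: "finite (fst G)" using assms unfolding simple_graph_def by blast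
  have "mur G \<le> rank_on (fst G) (univ_adj G \<alpha> \<beta> (\<gamma> + c) \<delta>)" by (rule mur_le[OF assms])
  also have "\<dots> = fvs.dim (colf (fst G) (univ_adj G \<alpha> \<beta> (\<gamma> + c) \<delta>) ` fst G)" by (rule rank_on_dim[OF fin])
  also have "colf (fst G) (univ_adj G \<alpha> \<beta> (\<gamma> + c) \<delta>) = (\<lambda>v w. if w \<in> fst G then univ_adj G \<alpha> \<beta> \<gamma> \<delta> w v + c else 0)"
    unfolding colf_def univ_adj_def by (auto simp: fun_eq_iff)
  finally show ?thesis .
qed

theorem lemma13:
  fixes G H :: "'a graph"
  assumes "simple_graph G" and "simple_graph H"
    and "fst G \<inter> fst H = {}"
  shows "mur G + mur H \<le> mur (graph_union G H)"
proof -
  define VG where "VG = fst G"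
  define VH where "VH = fst H"
  define U where "U = graph_union G H"
  have finG: "finite VG" using assms(1) unfolding simple_graph_def VG_def by blast
  have finH: "finite VH" using assms(2) unfolding simple_graph_def VH_def by blast
  have disj: "VG \<inter> VH = {}" using assms(3) unfolding VG_def VH_def .
  have EG: "snd G x y \<Longrightarrow> x \<in> VG \<and> y \<in> VG" for x y using assms(1) unfolding simple_graph_def VG_def by blast
  have EH: "snd H x y \<Longrightarrow> x \<in> VH \<and> y \<in> VH" for x y using assms(2) unfolding simple_graph_def VH_def by blast
  have sU: "simple_graph U" using assms(1,2) unfolding simple_graph_def U_def graph_union_def by auto
  obtain \<alpha> \<beta> \<gamma> \<delta> where \<alpha>: "\<alpha> \<noteq> 0" and mU: "mur U = rank_on (fst U) (univ_adj U \<alpha> \<beta> \<gamma> \<delta>)"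
    using mur_attained[OF sU] by blast
  define a where "a = univ_adj G \<alpha> \<beta> \<gamma> \<delta>"
  define b where "b = univ_adj H \<alpha> \<beta> \<gamma> \<delta>"
  have W: "fst U = VG \<union> VH" unfolding U_def graph_union_def VG_def VH_def by simp
  have degG: "degree U w = degree G w" if "w \<in> VG" for w
  proof -
    have "{u \<in> fst U. snd U w u} = {u \<in> fst G. snd G w u}"
      unfolding U_def graph_union_def using EG EH that disj VG_def by auto
    then show ?thesis unfolding degree_def by simp
  qed
  have degH: "degree U w = degree H w" if "w \<in> VH" for w
  proof -
    have "{u \<in> fst U. snd U w u} = {u \<in> fst H. snd H w u}"
      unfolding U_def graph_union_def using EG EH that disj VH_def VG_def by auto
    then show ?thesis unfolding degree_def by simp
  qed
  have colG: "colf (fst U) (univ_adj U \<alpha> \<beta> \<gamma> \<delta>) v = (\<lambda>w. if w \<in> VG then a w v else if w \<in> VH then \<gamma> else 0)"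
    if v: "v \<in> VG" for v
  proof (rule ext)
    fix w
    show "colf (fst U) (univ_adj U \<alpha> \<beta> \<gamma> \<delta>) v w = (if w \<in> VG then a w v else if w \<in> VH then \<gamma> else 0)"
    proof (cases "w \<in> VG")
      case True
      have "snd U w v = snd G w v" unfolding U_def graph_union_def using EH True disj by auto
      then show ?thesis using True degG[OF True] unfolding colf_def W a_def univ_adj_def by auto
    next
      case False
      then have "\<not> snd U w v" "w \<noteq> v" unfolding U_def graph_union_def using v disj by (auto dest: EG EH)
      then show ?thesis using False unfolding colf_def W univ_adj_def by simp
    qed
  qed
  have colH: "colf (fst U) (univ_adj U \<alpha> \<beta> \<gamma> \<delta>) v = (\<lambda>w. if w \<in> VH then b w v else if w \<in> VG then \<gamma> else 0)"
    if v: "v \<in> VH" for v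
  proof (rule ext)
    fix w
    show "colf (fst U) (univ_adj U \<alpha> \<beta> \<gamma> \<delta>) v w = (if w \<in> VH then b w v else if w \<in> VG then \<gamma> else 0)"
    proof (cases "w \<in> VH")
      case True
      have "snd U w v = snd H w v" unfolding U_def graph_union_def using EG True disj by auto
      then show ?thesis using True degH[OF True] unfolding colf_def W b_def univ_adj_def by auto
    next
      case False
      then have "\<not> snd U w v" "w \<noteq> v" unfolding U_def graph_union_def using v disj by (auto dest: EG EH)
      then show ?thesis using False disj unfolding colf_def W univ_adj_def by auto
    qed
  qed
  have fU: "finite (fst U)" using finG finH W by simp
  have "colf (fst U) (univ_adj U \<alpha> \<beta> \<gamma> \<delta>) ` fst U =
      (\<lambda>v w. if w \<in> VG then a w v else if w \<in> VH then \<gamma> else 0) ` VG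
      \<union> (\<lambda>v w. if w \<in> VH then b w v else if w \<in> VG then \<gamma> else 0) ` VH"
  proof -
    have i1: "colf (fst U) (univ_adj U \<alpha> \<beta> \<gamma> \<delta>) ` VG = (\<lambda>v w. if w \<in> VG then a w v else if w \<in> VH then \<gamma> else 0) ` VG"
      by (rule image_cong[OF refl colG])
    have i2: "colf (fst U) (univ_adj U \<alpha> \<beta> \<gamma> \<delta>) ` VH = (\<lambda>v w. if w \<in> VH then b w v else if w \<in> VG then \<gamma> else 0) ` VH"
      by (rule image_cong[OF refl colH])
    have "colf (fst U) (univ_adj U \<alpha> \<beta> \<gamma> \<delta>) ` fst U = colf (fst U) (univ_adj U \<alpha> \<beta> \<gamma> \<delta>) ` (VG \<union> VH)"
      using W by simp
    then show ?thesis using i1 i2 by (simp add: image_Un)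
  qed
  then have mU': "mur U = fvs.dim ((\<lambda>v w. if w \<in> VG then a w v else if w \<in> VH then \<gamma> else 0) ` VG
      \<union> (\<lambda>v w. if w \<in> VH then b w v else if w \<in> VG then \<gamma> else 0) ` VH)"
    using mU rank_on_dim[OF fU] by simp
  have "mur G + mur H \<le> mur U"
    unfolding mU'
  proof (rule core[OF finG finH disj])
    fix c show "mur G \<le> fvs.dim ((\<lambda>v w. if w \<in> VG then a w v + c else 0) ` VG)"
      using shift_bound[OF assms(1) \<alpha>] unfolding VG_def a_def .
  next
    fix d show "mur H \<le> fvs.dim ((\<lambda>v w. if w \<in> VH then b w v + d else 0) ` VH)"
      using shift_bound[OF assms(2) \<alpha>] unfolding VH_def b_def .
  qed
  then show ?thesis unfolding U_def .
qed


end
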